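(* Let $G_1=(V_1,E_1)$ be a finite connected graph with $n=|V_1|\ge 2$, let $u\in V_1$, and let $G$ be the graph obtained from $G_1$ by adding one new vertex $v$ and the single edge $\{u,v\}$. Let $D_1$, $D_G$ be the distance matrices of $G_1$, $G$. Assume: (C1) $2+\frac{k_1}{n}\neq 0$; (C2) $D_1$ is invertible; (C3) $k_u:=K_{G_1}(u)\neq 0$, where $K_{G_1}=nD_1^{-1}\mathbf{1}_n$ is the Steinerberger curvature of $G_1$ and $k_1=\sum_{x\in V_1}K_{G_1}(x)$ is its total curvature. Then $D_G$ is invertible and the Steinerberger curvature $K_G=(n+1)D_G^{-1}\mathbf{1}_{n+1}$ of $G$ satisfies $$K_G(x)=\alpha\,K_{G_1}(x)\quad\text{for all }x\in V_1\setminus\{u\},\qquad \alpha=\frac{2(n+1)}{2n+k_1},$$ $$K_G(u)=\gamma\,k_u,\quad \gamma=\Big(1-\frac{k_1}{2k_u}\Big)\alpha,\qquad K_G(v)=\frac{(n+1)k_1}{2n+k_1}.$$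
   Context: All graphs are finite, simple, connected and undirected, with the combinatorial shortest-path distance $d$. For $G=(V,E)$ with $V=\{v_1,\dots,v_n\}$, let $D=(d(v_i,v_j))_{i,j=1}^n$ be its distance matrix and $\mathbf{1}_n\in\mathbb{R}^n$ the all-ones column vector. The Steinerberger curvature $K\in\mathbb{R}^n$ (written $K_i$ or $K(v_i)$) is defined as follows: if $DK=n\mathbf{1}_n$ has a unique solution, $K$ is that solution; if it has several solutions, $K$ is a solution for which $\min_i K_i$ is maximal; if it has no solution, $K=nD^\dagger\mathbf{1}_n$ with $D^\dagger$ the Moore–Penrose pseudoinverse. The total curvature of a vertex subset $W$ is $K(W)=\sum_{w\in W}K(w)$. *)

theory Defs
  imports Complex_Main
begin

definition simple_graph :: "'a set \<Rightarrow> ('a \<Rightarrow> 'a \<Rightarrow> bool) \<Rightarrow> bool" where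
  "simple_graph V E \<longleftrightarrow> finite V \<and> (\<forall>a b. E a b \<longrightarrow> a \<in> V \<and> b \<in> V) \<and>
     (\<forall>a b. E a b \<longrightarrow> E b a) \<and> (\<forall>a. \<not> E a a)"

definition is_walk :: "'a set \<Rightarrow> ('a \<Rightarrow> 'a \<Rightarrow> bool) \<Rightarrow> 'a list \<Rightarrow> bool" where
  "is_walk V E xs \<longleftrightarrow> xs \<noteq> [] \<and> set xs \<subseteq> V \<and>
     (\<forall>i. Suc i < length xs \<longrightarrow> E (xs ! i) (xs ! Suc i))"

definition connected_graph :: "'a set \<Rightarrow> ('a \<Rightarrow> 'a \<Rightarrow> bool) \<Rightarrow> bool" where
  "connected_graph V E \<longleftrightarrow> V \<noteq> {} \<and>
     (\<forall>x\<in>V. \<forall>y\<in>V. \<exists>xs. is_walk V E xs \<and> hd xs = x \<and> last xs = y)"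

definition gdist :: "'a set \<Rightarrow> ('a \<Rightarrow> 'a \<Rightarrow> bool) \<Rightarrow> 'a \<Rightarrow> 'a \<Rightarrow> nat" where
  "gdist V E x y = (LEAST n. \<exists>xs. is_walk V E xs \<and> hd xs = x \<and> last xs = y \<and> length xs = Suc n)"

definition dist_matrix :: "'a set \<Rightarrow> ('a \<Rightarrow> 'a \<Rightarrow> bool) \<Rightarrow> 'a \<Rightarrow> 'a \<Rightarrow> real" where
  "dist_matrix V E x y = real (gdist V E x y)"

definition is_inverse_on :: "'a set \<Rightarrow> ('a \<Rightarrow> 'a \<Rightarrow> real) \<Rightarrow> ('a \<Rightarrow> 'a \<Rightarrow> real) \<Rightarrow> bool" where
  "is_inverse_on V A M \<longleftrightarrow>
     (\<forall>x\<in>V. \<forall>z\<in>V. (\<Sum>y\<in>V. M x y * A y z) = (if x = z then 1 else 0)) \<and>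
     (\<forall>x\<in>V. \<forall>z\<in>V. (\<Sum>y\<in>V. A x y * M y z) = (if x = z then 1 else 0))"

definition invertible_on :: "'a set \<Rightarrow> ('a \<Rightarrow> 'a \<Rightarrow> real) \<Rightarrow> bool" where
  "invertible_on V A \<longleftrightarrow> (\<exists>M. is_inverse_on V A M)"

text \<open>The inverse (entries outside V\<times>V set to 0 to make it unique).\<close>
definition inverse_on :: "'a set \<Rightarrow> ('a \<Rightarrow> 'a \<Rightarrow> real) \<Rightarrow> 'a \<Rightarrow> 'a \<Rightarrow> real" where
  "inverse_on V A = (THE M. is_inverse_on V A M \<and> (\<forall>x y. (x \<notin> V \<or> y \<notin> V) \<longrightarrow> M x y = 0))"

definition curvature :: "'a set \<Rightarrow> ('a \<Rightarrow> 'a \<Rightarrow> bool) \<Rightarrow> 'a \<Rightarrow> real" where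
  "curvature V E x = real (card V) * (\<Sum>y\<in>V. inverse_on V (dist_matrix V E) x y)"

definition add_edge :: "('a \<Rightarrow> 'a \<Rightarrow> bool) \<Rightarrow> 'a \<Rightarrow> 'a \<Rightarrow> 'a \<Rightarrow> 'a \<Rightarrow> bool" where
  "add_edge E u v a b \<longleftrightarrow> E a b \<or> (a = u \<and> b = v) \<or> (a = v \<and> b = u)"

end

theory Submission
  imports Defs
begin

lemma walk_single[simp]: "is_walk V E [x] \<longleftrightarrow> x \<in> V"
  by (auto simp: is_walk_def)

lemma walk_Cons2: "is_walk V E (x#y#ys) \<longleftrightarrow> x \<in> V \<and> E x y \<and> is_walk V E (y#ys)"
proof
  assume h: "is_walk V E (x#y#ys)"
  show "x \<in> V \<and> E x y \<and> is_walk V E (y#ys)"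
  proof (intro conjI)
    show "x \<in> V" using h by (auto simp: is_walk_def)
    have "Suc 0 < length (x#y#ys)" by simp
    then have "E ((x#y#ys) ! 0) ((x#y#ys) ! Suc 0)" using h unfolding is_walk_def by blast
    then show "E x y" by simp
    show "is_walk V E (y#ys)" unfolding is_walk_def
    proof (intro conjI allI impI)
      show "set (y # ys) \<subseteq> V" using h by (auto simp: is_walk_def)
      fix i assume "Suc i < length (y#ys)"
      then have "Suc (Suc i) < length (x#y#ys)" by simp
      then have "E ((x#y#ys) ! Suc i) ((x#y#ys) ! Suc (Suc i))" using h unfolding is_walk_def by blast
      then show "E ((y # ys) ! i) ((y # ys) ! Suc i)" by simp
    qed simp
  qed
next
  assume h: "x \<in> V \<and> E x y \<and> is_walk V E (y#ys)"
  show "is_walk V E (x#y#ys)" unfolding is_walk_def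
  proof (intro conjI allI impI)
    show "set (x # y # ys) \<subseteq> V" using h by (auto simp: is_walk_def)
    fix i assume "Suc i < length (x#y#ys)"
    then show "E ((x # y # ys) ! i) ((x # y # ys) ! Suc i)"
      using h by (cases i) (auto simp: is_walk_def)
  qed simp
qed

lemma walk_rev:
  assumes "is_walk V E xs" "\<And>a b. E a b \<Longrightarrow> E b a"
  shows "is_walk V E (rev xs)"
  unfolding is_walk_def
proof (intro conjI allI impI)
  show "rev xs \<noteq> []" "set (rev xs) \<subseteq> V" using assms by (auto simp: is_walk_def)
  fix i assume i: "Suc i < length (rev xs)"
  define j where "j = length xs - 2 - i"
  have j: "Suc j < length xs" using i by (simp add: j_def)
  have "E (xs ! j) (xs ! Suc j)" using assms(1) j by (auto simp: is_walk_def)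
  moreover have "rev xs ! i = xs ! (length xs - Suc i)" using i by (simp add: rev_nth)
  moreover have "length xs - Suc i = Suc j" using i unfolding j_def by simp
  moreover have "rev xs ! Suc i = xs ! (length xs - Suc (Suc i))" using i by (simp add: rev_nth)
  moreover have "length xs - Suc (Suc i) = j" unfolding j_def by simp
  ultimately show "E (rev xs ! i) (rev xs ! Suc i)" using assms(2) by simp
qed

lemma gdist_le:
  assumes "is_walk V E xs" "hd xs = x" "last xs = y"
  shows "gdist V E x y \<le> length xs - 1"
proof -
  have "xs \<noteq> []" using assms by (auto simp: is_walk_def)
  then have "length xs = Suc (length xs - 1)" by simp
  then show ?thesis unfolding gdist_def using assms by (intro Least_le) metis
qed

lemma gdist_walk:
  assumes "is_walk V E xs" "hd xs = x" "last xs = y"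
  obtains ys where "is_walk V E ys" "hd ys = x" "last ys = y" "length ys = Suc (gdist V E x y)"
proof -
  have "xs \<noteq> []" using assms by (auto simp: is_walk_def)
  then have "\<exists>n xs. is_walk V E xs \<and> hd xs = x \<and> last xs = y \<and> length xs = Suc n"
    using assms by (intro exI[of _ "length xs - 1"] exI[of _ xs]) auto
  then have "\<exists>xs. is_walk V E xs \<and> hd xs = x \<and> last xs = y \<and> length xs = Suc (gdist V E x y)"
    unfolding gdist_def by (rule LeastI_ex)
  then show ?thesis using that by blast
qed

lemma gdist_sym:
  assumes "\<And>a b. E a b \<Longrightarrow> E b a"
  shows "gdist V E x y = gdist V E y x"
proof -
  have "\<And>x y n. (\<exists>xs. is_walk V E xs \<and> hd xs = x \<and> last xs = y \<and> length xs = Suc n)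
     \<Longrightarrow> (\<exists>xs. is_walk V E xs \<and> hd xs = y \<and> last xs = x \<and> length xs = Suc n)"
  proof -
    fix x y n assume "\<exists>xs. is_walk V E xs \<and> hd xs = x \<and> last xs = y \<and> length xs = Suc n"
    then obtain xs where h: "is_walk V E xs" "hd xs = x" "last xs = y" "length xs = Suc n" by blast
    then have "xs \<noteq> []" by auto
    then show "\<exists>xs. is_walk V E xs \<and> hd xs = y \<and> last xs = x \<and> length xs = Suc n"
      using h walk_rev[OF h(1) assms] by (intro exI[of _ "rev xs"]) (auto simp: hd_rev last_rev)
  qed
  then have "\<And>n. (\<exists>xs. is_walk V E xs \<and> hd xs = x \<and> last xs = y \<and> length xs = Suc n)
     = (\<exists>xs. is_walk V E xs \<and> hd xs = y \<and> last xs = x \<and> length xs = Suc n)" by blast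
  then show ?thesis unfolding gdist_def by simp
qed

lemma gdist_refl: "x \<in> V \<Longrightarrow> gdist V E x x = 0"
  using gdist_le[of V E "[x]" x x] by simp


lemma walk_hd_in: "is_walk V E xs \<Longrightarrow> hd xs \<in> V"
  by (cases xs) (auto simp: is_walk_def)

lemma walk_mono: "is_walk V E xs \<Longrightarrow> V \<subseteq> V' \<Longrightarrow> (\<And>a b. E a b \<Longrightarrow> E' a b) \<Longrightarrow> is_walk V' E' xs"
  unfolding is_walk_def by blast

lemma proj_walk:
  assumes E1: "\<And>a b. E1 a b \<Longrightarrow> a \<in> V1 \<and> b \<in> V1" and v: "v \<notin> V1" and u: "u \<in> V1"
  shows "is_walk (insert v V1) (add_edge E1 u v) xs \<Longrightarrow> hd xs \<in> V1 \<Longrightarrow> last xs \<in> V1 \<Longrightarrow>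
    \<exists>ys. is_walk V1 E1 ys \<and> hd ys = hd xs \<and> last ys = last xs \<and> length ys \<le> length xs"
proof (induction "length xs" arbitrary: xs rule: less_induct)
  case less
  show ?case
  proof (cases xs)
    case Nil then show ?thesis using less.prems by (simp add: is_walk_def)
  next
    case (Cons x rest)
    show ?thesis
    proof (cases rest)
      case Nil
      then show ?thesis using Cons less.prems by (intro exI[of _ "[x]"]) auto
    next
      case (Cons y rest')
      note xs = \<open>xs = x # rest\<close>[unfolded Cons]
      have x: "x \<in> V1" using less.prems xs by simp
      have w: "add_edge E1 u v x y" "is_walk (insert v V1) (add_edge E1 u v) (y # rest')"
        using less.prems(1) xs walk_Cons2 by metis+
      show ?thesis
      proof (cases "y = v")
        case False
        then have Exy: "E1 x y" using w(1) x v by (auto simp: add_edge_def)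
        then have "y \<in> V1" using E1 by blast
        moreover have "last (y # rest') \<in> V1" using less.prems xs by simp
        ultimately obtain ys where ys: "is_walk V1 E1 ys" "hd ys = y" "last ys = last (y#rest')"
          "length ys \<le> length (y#rest')"
          using less.hyps[of "y#rest'"] w(2) xs by auto
        have "ys \<noteq> []" using ys by (auto simp: is_walk_def)
        then have "ys = y # tl ys" using ys(2) by (cases ys) auto
        then have "is_walk V1 E1 (x # ys)" using ys(1) x Exy walk_Cons2 by metis
        then show ?thesis using ys xs \<open>ys \<noteq> []\<close> by (intro exI[of _ "x#ys"]) auto
      next
        case True
        have xu: "x = u" using w(1) True v x E1 by (auto simp: add_edge_def)
        have "rest' \<noteq> []" using less.prems xs True v by auto
        then obtain z r where r: "rest' = z # r" by (cases rest') auto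
        have "add_edge E1 u v v z" "is_walk (insert v V1) (add_edge E1 u v) (z # r)"
          using w(2) r True walk_Cons2 by metis+
        then have zu: "z = u" using E1 v by (auto simp: add_edge_def)
        have "last (z # r) \<in> V1" using less.prems xs r True by simp
        then obtain ys where ys: "is_walk V1 E1 ys" "hd ys = z" "last ys = last (z#r)"
          "length ys \<le> length (z#r)"
          using less.hyps[of "z#r"] \<open>is_walk _ _ (z # r)\<close> xs r zu u by auto
        then show ?thesis using xs r xu zu True by (intro exI[of _ ys]) auto
      qed
    qed
  qed
qed

locale pend =
  fixes V1 :: "'a set" and E1 u v
  assumes sg: "simple_graph V1 E1" and cg: "connected_graph V1 E1"
    and u: "u \<in> V1" and v: "v \<notin> V1"
begin

abbreviation "V \<equiv> insert v V1"
abbreviation "E \<equiv> add_edge E1 u v"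

lemma E1V: "E1 a b \<Longrightarrow> a \<in> V1 \<and> b \<in> V1" using sg by (auto simp: simple_graph_def)
lemma E1sym: "E1 a b \<Longrightarrow> E1 b a" using sg by (auto simp: simple_graph_def)
lemma Esym: "E a b \<Longrightarrow> E b a" using E1sym by (auto simp: add_edge_def)

lemma conn: "x \<in> V1 \<Longrightarrow> y \<in> V1 \<Longrightarrow> \<exists>xs. is_walk V1 E1 xs \<and> hd xs = x \<and> last xs = y"
  using cg by (auto simp: connected_graph_def)

lemma walk1: "is_walk V1 E1 xs \<Longrightarrow> is_walk V E xs"
  by (erule walk_mono) (auto simp: add_edge_def)

lemma dist_in: assumes "x \<in> V1" "y \<in> V1" shows "gdist V E x y = gdist V1 E1 x y"
proof -
  obtain xs where "is_walk V1 E1 xs" "hd xs = x" "last xs = y" using conn assms by blast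
  then obtain ys where ys: "is_walk V1 E1 ys" "hd ys = x" "last ys = y" "length ys = Suc (gdist V1 E1 x y)"
    by (rule gdist_walk)
  have le1: "gdist V E x y \<le> gdist V1 E1 x y" using gdist_le[OF walk1[OF ys(1)] ys(2,3)] ys(4) by simp
  obtain zs where zs: "is_walk V E zs" "hd zs = x" "last zs = y" "length zs = Suc (gdist V E x y)"
    using walk1[OF ys(1)] ys(2,3) by (rule gdist_walk)
  obtain ws where ws: "is_walk V1 E1 ws" "hd ws = x" "last ws = y" "length ws \<le> length zs"
    using proj_walk[OF E1V v u zs(1)] zs assms by auto
  have "gdist V1 E1 x y \<le> gdist V E x y" using gdist_le[OF ws(1-3)] ws(4) zs(4) by simp
  then show ?thesis using le1 by simp
qed

lemma dist_v: assumes "x \<in> V1" shows "gdist V E v x = gdist V1 E1 u x + 1"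
proof -
  obtain xs where "is_walk V1 E1 xs" "hd xs = u" "last xs = x" using conn assms u by blast
  then obtain ys where ys: "is_walk V1 E1 ys" "hd ys = u" "last ys = x" "length ys = Suc (gdist V1 E1 u x)"
    by (rule gdist_walk)
  have "ys = u # tl ys" using ys by (cases ys) (auto simp: is_walk_def)
  then have "is_walk V E (v # ys)" using walk1[OF ys(1)] walk_Cons2[of V E v u "tl ys"]
    by (auto simp: add_edge_def)
  then have le1: "gdist V E v x \<le> gdist V1 E1 u x + 1"
    using gdist_le[of V E "v # ys" v x] ys by (auto simp: is_walk_def)
  obtain zs where zs: "is_walk V E zs" "hd zs = v" "last zs = x" "length zs = Suc (gdist V E v x)"
  proof -
    have "last (v # ys) = x" using ys by (auto simp: is_walk_def)
    show ?thesis by (rule gdist_walk[OF \<open>is_walk V E (v # ys)\<close> _ \<open>last (v # ys) = x\<close>]) (use that in auto)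
  qed
  have "zs \<noteq> [v]"
  proof
    assume "zs = [v]" then have "x = v" using zs(3) by simp
    then show False using assms v by simp
  qed
  moreover have "zs \<noteq> []" using zs by (auto simp: is_walk_def)
  ultimately obtain y r where zr: "zs = v # y # r" using zs(2)
    by (cases zs; cases "tl zs") auto
  have "E v y" "is_walk V E (y # r)" using zs(1) zr walk_Cons2 by metis+
  then have yu: "y = u" using E1V v by (auto simp: add_edge_def)
  have "gdist V E u x \<le> length (y # r) - 1"
    using gdist_le[OF \<open>is_walk V E (y # r)\<close>] zs(3) zr yu by simp
  then have "gdist V1 E1 u x + 1 \<le> gdist V E v x" using dist_in[OF u assms] zr zs(4) by simp
  then show ?thesis using le1 by simp
qed

end

lemma sdelta1: "finite A \<Longrightarrow> a \<in> A \<Longrightarrow> (\<Sum>y\<in>A. f y * (if y = a then 1 else 0)) = (f a::real)"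
proof -
  assume "finite A" "a \<in> A"
  have "(\<Sum>y\<in>A. f y * (if y = a then 1 else 0)) = (\<Sum>y\<in>A. if y = a then f y else 0)"
    by (rule sum.cong) auto
  also have "\<dots> = f a" using \<open>finite A\<close> \<open>a \<in> A\<close> by (simp add: sum.delta')
  finally show ?thesis .
qed

lemma sdelta2: "finite A \<Longrightarrow> a \<in> A \<Longrightarrow> (\<Sum>y\<in>A. (if a = y then 1 else 0) * f y) = (f a::real)"
proof -
  assume "finite A" "a \<in> A"
  have "(\<Sum>y\<in>A. (if a = y then 1 else 0) * f y) = (\<Sum>y\<in>A. if a = y then f y else 0)"
    by (rule sum.cong) auto
  also have "\<dots> = f a" using \<open>finite A\<close> \<open>a \<in> A\<close> by (simp add: sum.delta)
  finally show ?thesis .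
qed

lemma sswap: "(\<Sum>y\<in>A. f y * (\<Sum>z\<in>B. g y z)) = (\<Sum>z\<in>B. \<Sum>y\<in>A. f y * (g y z::real))"
  by (simp add: sum_distrib_left) (rule sum.swap)

lemma inv_unique:
  assumes "finite V" "is_inverse_on V A M" "is_inverse_on V A M'" "x \<in> V" "z \<in> V"
  shows "M x z = M' x z"
proof -
  have "M x z = (\<Sum>y\<in>V. M x y * (if y = z then 1 else 0))" using assms by (simp add: sdelta1)
  also have "\<dots> = (\<Sum>y\<in>V. M x y * (\<Sum>w\<in>V. A y w * M' w z))"
    using assms(3,5) by (auto simp: is_inverse_on_def intro!: sum.cong)
  also have "\<dots> = (\<Sum>w\<in>V. \<Sum>y\<in>V. M x y * (A y w * M' w z))" by (rule sswap)
  also have "\<dots> = (\<Sum>w\<in>V. (\<Sum>y\<in>V. M x y * A y w) * M' w z)"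
    by (simp add: sum_distrib_right mult.assoc)
  also have "\<dots> = (\<Sum>w\<in>V. (if x = w then 1 else 0) * M' w z)"
    using assms(2,4) by (auto simp: is_inverse_on_def intro!: sum.cong)
  also have "\<dots> = M' x z" using assms by (simp add: sdelta2)
  finally show ?thesis .
qed

lemma inverse_on_eq:
  assumes "finite V" "is_inverse_on V A M" "x \<in> V" "y \<in> V"
  shows "inverse_on V A x y = M x y"
proof -
  define M0 where "M0 = (\<lambda>x y. if x \<in> V \<and> y \<in> V then M x y else 0)"
  have M0: "is_inverse_on V A M0" using assms(2) unfolding is_inverse_on_def M0_def
    by (auto intro!: sum.cong)
  have "inverse_on V A = M0" unfolding inverse_on_def
  proof (rule the_equality)
    show "is_inverse_on V A M0 \<and> (\<forall>x y. x \<notin> V \<or> y \<notin> V \<longrightarrow> M0 x y = 0)"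
      using M0 by (auto simp: M0_def)
    fix M1 assume h: "is_inverse_on V A M1 \<and> (\<forall>x y. x \<notin> V \<or> y \<notin> V \<longrightarrow> M1 x y = 0)"
    show "M1 = M0"
    proof (intro ext)
      fix a b show "M1 a b = M0 a b"
        using h inv_unique[OF assms(1), of A M1 M0 a b] M0 by (cases "a \<in> V \<and> b \<in> V") (auto simp: M0_def)
    qed
  qed
  then show ?thesis using assms by (simp add: M0_def)
qed

lemma inverse_on_is:
  assumes "finite V" "invertible_on V A"
  shows "is_inverse_on V A (inverse_on V A)"
proof -
  obtain M where M: "is_inverse_on V A M" using assms by (auto simp: invertible_on_def)
  show ?thesis using M inverse_on_eq[OF assms(1) M] unfolding is_inverse_on_def
    by (auto intro!: sum.cong) 
qed

theorem mainTheorem4: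
  fixes V1 :: "'a set" and E1 :: "'a \<Rightarrow> 'a \<Rightarrow> bool" and u v :: 'a
  assumes "simple_graph V1 E1" and "connected_graph V1 E1" and "card V1 \<ge> 2"
    and "u \<in> V1" and "v \<notin> V1"
    and C1: "2 + (\<Sum>x\<in>V1. curvature V1 E1 x) / real (card V1) \<noteq> 0"
    and C2: "invertible_on V1 (dist_matrix V1 E1)"
    and C3: "curvature V1 E1 u \<noteq> 0"
  shows "invertible_on (insert v V1) (dist_matrix (insert v V1) (add_edge E1 u v)) \<and>
    (let n = real (card V1); k1 = (\<Sum>x\<in>V1. curvature V1 E1 x); ku = curvature V1 E1 u;
         \<alpha> = 2 * (n + 1) / (2 * n + k1); \<gamma> = (1 - k1 / (2 * ku)) * \<alpha>;
         K = curvature (insert v V1) (add_edge E1 u v)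
     in (\<forall>x\<in>V1 - {u}. K x = \<alpha> * curvature V1 E1 x) \<and>
        K u = \<gamma> * ku \<and>
        K v = (n + 1) * k1 / (2 * n + k1))"
proof -
  interpret pend V1 E1 u v using assms by unfold_locales
  have fin: "finite V1" using assms(1) by (simp add: simple_graph_def)
  have u: "u \<in> V1" and v: "v \<notin> V1" using assms by auto
  define n where "n = real (card V1)"
  have npos: "n > 0" using assms(3) by (simp add: n_def)
  define D where "D = dist_matrix V1 E1"
  define D' where "D' = dist_matrix (insert v V1) (add_edge E1 u v)"
  define N where "N = inverse_on V1 D"
  have Ninv: "is_inverse_on V1 D N" unfolding N_def D_def by (rule inverse_on_is[OF fin C2])
  have Dsym: "\<And>x y. D x y = D y x" unfolding D_def dist_matrix_def
    using gdist_sym[where E=E1, OF E1sym] by presburger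
  have D0: "\<And>x. x \<in> V1 \<Longrightarrow> D x x = 0" unfolding D_def dist_matrix_def by (simp add: gdist_refl)
  have D'in: "\<And>x y. x \<in> V1 \<Longrightarrow> y \<in> V1 \<Longrightarrow> D' x y = D x y"
    unfolding D_def D'_def dist_matrix_def by (simp add: dist_in)
  have D'vx: "\<And>x. x \<in> V1 \<Longrightarrow> D' v x = D x u + 1"
    unfolding D_def D'_def dist_matrix_def using dist_v Dsym[unfolded D_def dist_matrix_def] by simp
  have D'sym: "\<And>x y. D' x y = D' y x" unfolding D'_def dist_matrix_def
    using gdist_sym[where E="add_edge E1 u v", OF Esym] by presburger
  have D'xv: "\<And>x. x \<in> V1 \<Longrightarrow> D' x v = D x u + 1" using D'vx D'sym[of _ v] by simp
  have D'vv: "D' v v = 0" unfolding D'_def dist_matrix_def by (simp add: gdist_refl)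
  have Nl: "\<And>x z. x \<in> V1 \<Longrightarrow> z \<in> V1 \<Longrightarrow> (\<Sum>y\<in>V1. N x y * D y z) = (if x = z then 1 else 0)"
    using Ninv by (simp add: is_inverse_on_def)
  have Nr: "\<And>x z. x \<in> V1 \<Longrightarrow> z \<in> V1 \<Longrightarrow> (\<Sum>y\<in>V1. D x y * N y z) = (if x = z then 1 else 0)"
    using Ninv by (simp add: is_inverse_on_def)
  have NTinv: "is_inverse_on V1 D (\<lambda>x y. N y x)" unfolding is_inverse_on_def
  proof (intro conjI ballI)
    fix x z assume "x \<in> V1" "z \<in> V1"
    then show "(\<Sum>y\<in>V1. N y x * D y z) = (if x = z then 1 else 0)"
      using Nr[of z x] by (auto simp: Dsym mult.commute)
    show "(\<Sum>y\<in>V1. D x y * N z y) = (if x = z then 1 else 0)"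
      using Nl[of z x] \<open>x \<in> V1\<close> \<open>z \<in> V1\<close> by (auto simp: Dsym mult.commute)
  qed
  have Nsym: "\<And>x y. x \<in> V1 \<Longrightarrow> y \<in> V1 \<Longrightarrow> N x y = N y x"
    using inv_unique[OF fin Ninv NTinv] by blast
  define R where "R x = (\<Sum>y\<in>V1. N x y)" for x
  have curv: "\<And>x. curvature V1 E1 x = n * R x"
    unfolding curvature_def R_def n_def N_def D_def by simp
  define k1 where "k1 = (\<Sum>x\<in>V1. curvature V1 E1 x)"
  have k1: "k1 = n * sum R V1" unfolding k1_def curv by (simp add: sum_distrib_left)
  have DR: "\<And>x. x \<in> V1 \<Longrightarrow> (\<Sum>y\<in>V1. D x y * R y) = 1"
  proof -
    fix x assume x: "x \<in> V1"
    have "(\<Sum>y\<in>V1. D x y * R y) = (\<Sum>z\<in>V1. \<Sum>y\<in>V1. D x y * N y z)"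
      unfolding R_def by (rule sswap)
    also have "\<dots> = (\<Sum>z\<in>V1. if x = z then 1 else 0)" using Nr x by simp
    also have "\<dots> = 1" using fin x by simp
    finally show "(\<Sum>y\<in>V1. D x y * R y) = 1" .
  qed
  define c where "c x = (if x = u then 1 else 0) + R x" for x
  have Dc: "\<And>x. x \<in> V1 \<Longrightarrow> (\<Sum>y\<in>V1. D x y * c y) = D x u + 1"
  proof -
    fix x assume x: "x \<in> V1"
    have "(\<Sum>y\<in>V1. D x y * c y) = (\<Sum>y\<in>V1. D x y * (if y = u then 1 else 0)) + (\<Sum>y\<in>V1. D x y * R y)"
      unfolding c_def by (simp add: distrib_left sum.distrib)
    then show "(\<Sum>y\<in>V1. D x y * c y) = D x u + 1" using DR[OF x] sdelta1[OF fin u] by simp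
  qed
  have wN: "\<And>z. z \<in> V1 \<Longrightarrow> (\<Sum>y\<in>V1. (D y u + 1) * N y z) = c z"
  proof -
    fix z assume z: "z \<in> V1"
    have "(\<Sum>y\<in>V1. (D y u + 1) * N y z) = (\<Sum>y\<in>V1. D y u * N y z) + (\<Sum>y\<in>V1. N y z)"
      by (simp add: distrib_right sum.distrib)
    also have "(\<Sum>y\<in>V1. D y u * N y z) = (\<Sum>y\<in>V1. N z y * D y u)"
      by (rule sum.cong) (use Nsym z in auto)
    also have "(\<Sum>y\<in>V1. N y z) = (\<Sum>y\<in>V1. N z y)"
      by (rule sum.cong) (use Nsym z in auto)
    finally have "(\<Sum>y\<in>V1. (D y u + 1) * N y z) = (\<Sum>y\<in>V1. N z y * D y u) + (\<Sum>y\<in>V1. N z y)" .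
    then show "(\<Sum>y\<in>V1. (D y u + 1) * N y z) = c z" using Nl[OF z u] by (simp add: c_def R_def)
  qed
  define S where "S = 2 + sum R V1"
  have sumc: "sum c V1 = 1 + sum R V1" unfolding c_def using fin u by (simp add: sum.distrib)
  have wc: "(\<Sum>y\<in>V1. (D y u + 1) * c y) = S"
  proof -
    have "(\<Sum>y\<in>V1. (D y u + 1) * c y) = (\<Sum>y\<in>V1. D u y * c y) + sum c V1"
      by (simp add: distrib_right sum.distrib Dsym)
    then show ?thesis using Dc[OF u] D0[OF u] sumc by (simp add: S_def)
  qed
  have Sne: "S \<noteq> 0" using C1 npos unfolding S_def by (simp add: k1[unfolded k1_def] n_def)
  have sV: "\<And>f. (\<Sum>y\<in>insert v V1. f y) = f v + (\<Sum>y\<in>V1. f y)" using fin v by simp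
  define M where "M x y = (if x \<in> V1 \<and> y \<in> V1 then N x y - c x * c y / S
      else if x \<in> V1 \<and> y = v then c x / S else if x = v \<and> y \<in> V1 then c y / S
      else if x = v \<and> y = v then -1 / S else 0)" for x y
  have Mvv: "M v v = -1 / S" using v by (simp add: M_def)
  have Mxv: "\<And>x. x \<in> V1 \<Longrightarrow> M x v = c x / S" using v by (auto simp: M_def)
  have Mvy: "\<And>y. y \<in> V1 \<Longrightarrow> M v y = c y / S" using v by (auto simp: M_def)
  have Min: "\<And>x y. x \<in> V1 \<Longrightarrow> y \<in> V1 \<Longrightarrow> M x y = N x y - c x * c y / S" by (simp add: M_def)
  have RI: "(\<Sum>y\<in>insert v V1. D' x y * M y z) = (if x = z then 1 else 0)"
    if x: "x \<in> insert v V1" and z: "z \<in> insert v V1" for x z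
  proof (cases "x = v")
    case False
    then have x: "x \<in> V1" using x by simp
    show ?thesis
    proof (cases "z = v")
      case False
      then have z: "z \<in> V1" using z by simp
      have "(\<Sum>y\<in>V1. D' x y * M y z) = (\<Sum>y\<in>V1. D x y * N y z - (D x y * c y) * (c z / S))"
        by (rule sum.cong) (simp_all add: D'in Min x z algebra_simps)
      also have "\<dots> = (\<Sum>y\<in>V1. D x y * N y z) - (\<Sum>y\<in>V1. D x y * c y) * (c z / S)"
        by (simp only: sum_subtractf sum_distrib_right)
      also have "\<dots> = (if x = z then 1 else 0) - (D x u + 1) * (c z / S)"
        using Nr[OF x z] Dc[OF x] by simp
      finally show ?thesis using fin v D'xv[OF x] Mvy[OF z] \<open>x \<noteq> v\<close> by simp
    next
      case True
      have "(\<Sum>y\<in>V1. D' x y * M y z) = (\<Sum>y\<in>V1. D x y * c y) / S"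
        by (simp add: sum_divide_distrib True D'in Mxv x cong: sum.cong)
      then have h: "(\<Sum>y\<in>V1. D' x y * M y z) = (D x u + 1) / S" using Dc[OF x] by simp
      have a: "(D x u + 1) * (-1 / S) + (D x u + 1) / S = 0" by (simp add: field_simps)
      show ?thesis using fin v D'xv[OF x] Mvv True h a \<open>x \<noteq> v\<close> by simp
    qed
  next
    case True
    show ?thesis
    proof (cases "z = v")
      case False
      then have z: "z \<in> V1" using z by simp
      have "(\<Sum>y\<in>V1. D' x y * M y z) = (\<Sum>y\<in>V1. (D y u + 1) * N y z - ((D y u + 1) * c y) * (c z / S))"
        by (rule sum.cong) (simp_all add: D'vx Min True z Sne field_simps)
      also have "\<dots> = (\<Sum>y\<in>V1. (D y u + 1) * N y z) - (\<Sum>y\<in>V1. (D y u + 1) * c y) * (c z / S)"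
        by (simp only: sum_subtractf sum_distrib_right)
      also have "\<dots> = 0" using wN[OF z] wc Sne by simp
      finally show ?thesis using fin v D'vv True False by simp
    next
      case True
      have "(\<Sum>y\<in>V1. D' x y * M y z) = (\<Sum>y\<in>V1. (D y u + 1) * c y) / S"
        by (simp add: sum_divide_distrib True \<open>x = v\<close> D'vx Mxv cong: sum.cong)
      then show ?thesis using fin v D'vv True \<open>x = v\<close> wc Sne by simp
    qed
  qed
  have Msym: "M x y = M y x" if xy: "x \<in> insert v V1" "y \<in> insert v V1" for x y
  proof -
    consider "x \<in> V1" "y \<in> V1" | "x \<in> V1" "y = v" | "x = v" "y \<in> V1" | "x = v" "y = v"
      using xy by blast
    then show ?thesis
    proof cases
      case 1 then show ?thesis using Nsym[of x y] Min[of x y] Min[of y x] by (simp add: mult.commute)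
    next
      case 2 then show ?thesis using Mxv Mvy by simp
    next
      case 3 then show ?thesis using Mxv Mvy by simp
    next
      case 4 then show ?thesis by simp
    qed
  qed
  have LI: "(\<Sum>y\<in>insert v V1. M x y * D' y z) = (if x = z then 1 else 0)"
    if x: "x \<in> insert v V1" and z: "z \<in> insert v V1" for x z
  proof -
    have "(\<Sum>y\<in>insert v V1. M x y * D' y z) = (\<Sum>y\<in>insert v V1. D' z y * M y x)"
      by (rule sum.cong) (use Msym D'sym x in auto)
    also have "\<dots> = (if z = x then 1 else 0)" using RI z x by simp
    finally show ?thesis by auto
  qed
  have Minv: "is_inverse_on (insert v V1) D' M" unfolding is_inverse_on_def using RI LI by blast
  have inv: "invertible_on (insert v V1) D'" unfolding invertible_on_def using Minv by blast
  have nS: "2 * n + k1 = n * S" unfolding S_def k1 by (simp add: algebra_simps)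
  have den: "2 * n + k1 \<noteq> 0" using nS Sne npos by simp
  define alpha where "alpha = 2 * (n + 1) / (2 * n + k1)"
  define kk where "kk = (n + 1) * k1 / (2 * n + k1)"
  have ak1: "alpha * n + kk = n + 1"
  proof -
    have "alpha * n + kk = (2 * (n + 1) * n + (n + 1) * k1) / (2 * n + k1)"
      unfolding alpha_def kk_def by (simp only: times_divide_eq_left add_divide_distrib[symmetric])
    also have "2 * (n + 1) * n + (n + 1) * k1 = (n + 1) * (2 * n + k1)"
      by (simp add: algebra_simps)
    finally show ?thesis using den by simp
  qed
  have ak2: "alpha * (n + k1) - kk = n + 1"
  proof -
    have "alpha * (n + k1) - kk = (2 * (n + 1) * (n + k1) - (n + 1) * k1) / (2 * n + k1)"
      unfolding alpha_def kk_def by (simp add: diff_divide_distrib)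
    also have "2 * (n + 1) * (n + k1) - (n + 1) * k1 = (n + 1) * (2 * n + k1)"
      by (simp add: algebra_simps)
    finally show ?thesis using den by simp
  qed
  define Kc where "Kc y = (if y = v then kk else alpha * n * R y - (if y = u then kk else 0))" for y
  have DK: "(\<Sum>y\<in>insert v V1. D' x y * Kc y) = n + 1" if x: "x \<in> insert v V1" for x
  proof (cases "x = v")
    case False
    then have x: "x \<in> V1" using x by simp
    have "(\<Sum>y\<in>V1. D' x y * Kc y) = (\<Sum>y\<in>V1. alpha * n * (D x y * R y) - kk * (D x y * (if y = u then 1 else 0)))"
      by (rule sum.cong) (use v x D'in in \<open>auto simp: Kc_def algebra_simps\<close>)
    also have "\<dots> = alpha * n - kk * D x u"
      by (simp add: sum_subtractf sum_distrib_left[symmetric] DR x sdelta1 fin u)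
    finally show ?thesis using fin v D'xv[OF x] False ak1 v by (simp add: Kc_def algebra_simps)
  next
    case True
    have "(\<Sum>y\<in>V1. D' x y * Kc y) = (\<Sum>y\<in>V1. alpha * n * (D u y * R y + R y) - kk * ((D y u + 1) * (if y = u then 1 else 0)))"
      by (rule sum.cong) (use v True D'vx Dsym in \<open>auto simp: Kc_def algebra_simps\<close>)
    also have "\<dots> = alpha * n * (1 + sum R V1) - kk * (D u u + 1)"
      by (simp add: sum_subtractf sum_distrib_left[symmetric] sum.distrib DR u sdelta1[OF fin u])
    also have "\<dots> = alpha * (n + k1) - kk" using D0[OF u] k1 by (simp add: algebra_simps)
    finally show ?thesis using fin v D'vv True ak2 by (simp add: Kc_def)
  qed
  have DK': "(\<Sum>z\<in>insert v V1. D' y z * (Kc z / (n + 1))) = 1" if "y \<in> insert v V1" for y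
  proof -
    have "(\<Sum>z\<in>insert v V1. D' y z * (Kc z / (n + 1))) = (\<Sum>z\<in>insert v V1. D' y z * Kc z) / (n + 1)"
      by (simp add: sum_divide_distrib)
    then show ?thesis using DK[OF that] npos by simp
  qed
  have rows: "(\<Sum>y\<in>insert v V1. M x y) = Kc x / (n + 1)" if x: "x \<in> insert v V1" for x
  proof -
    have "(\<Sum>y\<in>insert v V1. M x y) = (\<Sum>y\<in>insert v V1. M x y * (\<Sum>z\<in>insert v V1. D' y z * (Kc z / (n + 1))))"
      using DK' by simp
    also have "\<dots> = (\<Sum>z\<in>insert v V1. \<Sum>y\<in>insert v V1. M x y * (D' y z * (Kc z / (n + 1))))"
      by (rule sswap)
    also have "\<dots> = (\<Sum>z\<in>insert v V1. (\<Sum>y\<in>insert v V1. M x y * D' y z) * (Kc z / (n + 1)))"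
      by (simp only: sum_distrib_right mult.assoc)
    also have "\<dots> = (\<Sum>z\<in>insert v V1. (if x = z then 1 else 0) * (Kc z / (n + 1)))"
      using LI x by simp
    also have "\<dots> = Kc x / (n + 1)" by (rule sdelta2) (use x fin in simp_all)
    finally show ?thesis .
  qed
  have cardV: "real (card (insert v V1)) = n + 1" using fin v by (simp add: n_def)
  have curvV: "curvature (insert v V1) (add_edge E1 u v) x = Kc x" if x: "x \<in> insert v V1" for x
  proof -
    have "curvature (insert v V1) (add_edge E1 u v) x = (n + 1) * (\<Sum>y\<in>insert v V1. M x y)"
      unfolding curvature_def cardV D'_def[symmetric]
      using inverse_on_eq[OF _ Minv x] fin by simp
    then show ?thesis using rows[OF x] npos by simp
  qed
  have ku: "curvature V1 E1 u \<noteq> 0" by (rule C3)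
  have f1: "\<forall>x\<in>V1 - {u}. curvature (insert v V1) (add_edge E1 u v) x = alpha * curvature V1 E1 x"
    using curvV v by (auto simp: Kc_def curv)
  have f2: "curvature (insert v V1) (add_edge E1 u v) u = (1 - k1 / (2 * curvature V1 E1 u)) * alpha * curvature V1 E1 u"
  proof -
    have "(1 - k1 / (2 * curvature V1 E1 u)) * alpha * curvature V1 E1 u = alpha * curvature V1 E1 u - alpha * k1 / 2"
      using ku by (simp add: field_simps)
    also have "alpha * k1 / 2 = kk" unfolding alpha_def kk_def using den by (simp add: field_simps)
    moreover have "u \<noteq> v" using u v by auto
    ultimately show ?thesis using curvV[of u] u by (simp add: Kc_def curv)
  qed
  have f3: "curvature (insert v V1) (add_edge E1 u v) v = (n + 1) * k1 / (2 * n + k1)"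
    using curvV[of v] by (simp add: Kc_def kk_def)
  show ?thesis
    unfolding Let_def k1_def[symmetric] n_def[symmetric] alpha_def[symmetric]
    using inv f1 f2 f3 unfolding D'_def by simp
qed
end
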